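(* Let $(X,\delta,c)$ be an accepting automaton over $\Sigma$ and let $\mu\mathrm{PL}(\delta,c)$ be as in the context. Then $\mu\mathrm{PL}(\delta,c)$ is minimal: for any two states $U,V$ of $\mu\mathrm{PL}(\delta,c)$, if $L(U)=L(V)$ then $U=V$.
   Context: $\Sigma$ is a finite alphabet, $\Sigma^\ast$ the free monoid with empty word $\epsilon$, $u^r$ the reversal of a word $u$. An accepting automaton is $(X,\delta,c)$ with $\delta:X\to X^\Sigma$ (extended to words by $\delta(x)(\epsilon)=x$, $\delta(x)(wa)=\delta(\delta(x)(w))(a)$) and $c\subseteq X$. Define $\widehat{\delta}:P(X)\to P(X)^\Sigma$ by $\widehat{\delta}(U)(a)=\{x\in X\mid\delta(x)(a)\in U\}$, extended to words in the same way, so that $\widehat{\delta}(U)(w)=\{x\mid\delta(x)(w^r)\in U\}$. Let $\langle c\rangle=\{\widehat{\delta}(c)(w)\mid w\in\Sigma^\ast\}$ and let $\approx$ be the congruence on $\Sigma^\ast$ given by $u\approx v$ iff $\widehat{\delta}(U)(u)=\widehat{\delta}(U)(v)$ for all $U\in\langle c\rangle$. $\mu\mathrm{PL}(\delta,c)$ is the accepting automaton with state space $P(\Sigma^\ast/{\approx})$, transition $\widehat{\sigma}(\mathcal{U})(u)=\{[w]\mid[wu^r]\in\mathcal{U}\}$ and final states $\{\mathcal{U}\mid[\epsilon]\in\mathcal{U}\}$. For a state $\mathcal{U}$, $L(\mathcal{U})=\{u\in\Sigma^\ast\mid[\epsilon]\in\widehat{\sigma}(\mathcal{U})(u)\}$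 is the language it accepts. *)

theory Defs
  imports Main
begin

definition delta_word :: "('x \<Rightarrow> 'a \<Rightarrow> 'x) \<Rightarrow> 'x \<Rightarrow> 'a list \<Rightarrow> 'x" where
  "delta_word \<delta> x w = foldl \<delta> x w"

definition hat_delta1 :: "('x \<Rightarrow> 'a \<Rightarrow> 'x) \<Rightarrow> 'x set \<Rightarrow> 'a \<Rightarrow> 'x set" where
  "hat_delta1 \<delta> U a = {x. \<delta> x a \<in> U}"

definition hat_delta :: "('x \<Rightarrow> 'a \<Rightarrow> 'x) \<Rightarrow> 'x set \<Rightarrow> 'a list \<Rightarrow> 'x set" where
  "hat_delta \<delta> U w = foldl (hat_delta1 \<delta>) U w"

definition gen :: "('x \<Rightarrow> 'a \<Rightarrow> 'x) \<Rightarrow> 'x set \<Rightarrow> 'x set set" where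
  "gen \<delta> c = {hat_delta \<delta> c w | w. True}"

definition approx_rel :: "('x \<Rightarrow> 'a \<Rightarrow> 'x) \<Rightarrow> 'x set \<Rightarrow> ('a list \<times> 'a list) set" where
  "approx_rel \<delta> c = {(u, v). \<forall>U \<in> gen \<delta> c. hat_delta \<delta> U u = hat_delta \<delta> U v}"

definition cls :: "('x \<Rightarrow> 'a \<Rightarrow> 'x) \<Rightarrow> 'x set \<Rightarrow> 'a list \<Rightarrow> 'a list set" where
  "cls \<delta> c w = approx_rel \<delta> c `` {w}"

definition muPL_states :: "('x \<Rightarrow> 'a \<Rightarrow> 'x) \<Rightarrow> 'x set \<Rightarrow> 'a list set set set" where
  "muPL_states \<delta> c = Pow (UNIV // approx_rel \<delta> c)"

definition muPL_trans :: "('x \<Rightarrow> 'a \<Rightarrow> 'x) \<Rightarrow> 'x set \<Rightarrow> 'a list set set \<Rightarrow> 'a list \<Rightarrow> 'a list set set" where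
  "muPL_trans \<delta> c \<U> u = {cls \<delta> c w | w. cls \<delta> c (w @ rev u) \<in> \<U>}"

definition muPL_final :: "('x \<Rightarrow> 'a \<Rightarrow> 'x) \<Rightarrow> 'x set \<Rightarrow> 'a list set set set" where
  "muPL_final \<delta> c = {\<U> \<in> muPL_states \<delta> c. cls \<delta> c [] \<in> \<U>}"

definition muPL_lang :: "('x \<Rightarrow> 'a \<Rightarrow> 'x) \<Rightarrow> 'x set \<Rightarrow> 'a list set set \<Rightarrow> 'a list set" where
  "muPL_lang \<delta> c \<U> = {u. cls \<delta> c [] \<in> muPL_trans \<delta> c \<U> u}"

end

theory Submission
  imports Defs
begin

lemma cls_eq_iff: "cls \<delta> c w = cls \<delta> c v \<longleftrightarrow> (w, v) \<in> approx_rel \<delta> c"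
proof
  assume "cls \<delta> c w = cls \<delta> c v"
  hence "v \<in> cls \<delta> c w" by (auto simp: cls_def approx_rel_def)
  thus "(w, v) \<in> approx_rel \<delta> c" by (simp add: cls_def)
next
  assume "(w, v) \<in> approx_rel \<delta> c"
  thus "cls \<delta> c w = cls \<delta> c v" by (auto simp: cls_def approx_rel_def)
qed

lemma hat_app: "hat_delta \<delta> U (a @ b) = hat_delta \<delta> (hat_delta \<delta> U a) b"
  by (simp add: hat_delta_def)

lemma cong_nil:
  assumes "cls \<delta> c w = cls \<delta> c []"
  shows "cls \<delta> c (w @ x) = cls \<delta> c x"
proof -
  have h: "(w, []) \<in> approx_rel \<delta> c" using assms cls_eq_iff by metis
  have "(w @ x, x) \<in> approx_rel \<delta> c"
    unfolding approx_rel_def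
  proof (clarify)
    fix U assume "U \<in> gen \<delta> c"
    with h have "hat_delta \<delta> U w = U" by (auto simp: approx_rel_def hat_delta_def)
    thus "hat_delta \<delta> U (w @ x) = hat_delta \<delta> U x" by (simp add: hat_app)
  qed
  thus ?thesis using cls_eq_iff by metis
qed

lemma lang_iff: "u \<in> muPL_lang \<delta> c U \<longleftrightarrow> cls \<delta> c (rev u) \<in> U"
proof
  assume "u \<in> muPL_lang \<delta> c U"
  then obtain w where "cls \<delta> c [] = cls \<delta> c w" "cls \<delta> c (w @ rev u) \<in> U"
    by (auto simp: muPL_lang_def muPL_trans_def)
  thus "cls \<delta> c (rev u) \<in> U" using cong_nil by metis
next
  assume "cls \<delta> c (rev u) \<in> U"
  thus "u \<in> muPL_lang \<delta> c U"
    by (auto simp: muPL_lang_def muPL_trans_def intro!: exI[of _ "[]"])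
qed

lemma sub:
  assumes "U \<in> muPL_states \<delta> c" "muPL_lang \<delta> c U = muPL_lang \<delta> c V"
  shows "U \<subseteq> V"
proof
  fix X assume "X \<in> U"
  with assms(1) obtain v where X: "X = cls \<delta> c v"
    by (auto simp: muPL_states_def quotient_def cls_def)
  hence "rev v \<in> muPL_lang \<delta> c U" using \<open>X \<in> U\<close> by (simp add: lang_iff)
  hence "rev v \<in> muPL_lang \<delta> c V" using assms(2) by simp
  thus "X \<in> V" using X by (simp add: lang_iff)
qed

theorem mainTheorem5:
  fixes \<delta> :: "'x \<Rightarrow> 'a \<Rightarrow> 'x" and c :: "'x set"
    and U V :: "'a list set set"
  assumes "finite (UNIV :: 'a set)"
    and "U \<in> muPL_states \<delta> c" and "V \<in> muPL_states \<delta> c"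
    and "muPL_lang \<delta> c U = muPL_lang \<delta> c V"
  shows "U = V"
  using sub[OF assms(2) assms(4)] sub[OF assms(3) assms(4)[symmetric]] by blast

end
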